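(* Let $H_{2n}$ denote the Kauffman bracket evaluation of the tetrahedron graph with all six edges colored $2n$. Then the tail of the sequence $\{H_{2n}\}_{n\in\mathbb{N}}$ is $$T(H_{2n})=\frac{(q;q)_\infty^3}{1-q}\sum_{i=0}^{\infty}\frac{(-1)^i q^{(i+3i^2)/2}}{(q;q)_i^3}.$$
   Context: $(q;q)_m=\prod_{k=1}^m(1-q^k)$ ($(q;q)_0=1$), $(q;q)_\infty=\prod_{k\ge1}(1-q^k)$. With $q=A^4$, the tetrahedron evaluation satisfies the closed form $$H_{2n}=\frac{q^{-2n}(q;q)_n^{12}}{(1-q)(q;q)_{2n}^6}\sum_{i=0}^{n}\frac{(-1)^i q^{(i+3i^2)/2}(q;q)_{4n-i}}{(q;q)_{n-i}^4(q;q)_i^3}.$$ Rational functions are identified with their Laurent series expansions in $q$ (normalized to lie in $\mathbb{Z}[q^{-1}][[q]]$). For non-zero Laurent series $P_1,P_2$, $P_1\doteq_nP_2$ means their first $n$ coefficients (starting from each one's minimal degree) agree up to a common sign. The tail of a sequence $\{P_n\}$ is the series $T$ of minimal degree $0$ with $T\doteq_nP_n$ for every $n$ (determined up to sign). *)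

theory Defs
  imports "HOL-Computational_Algebra.Formal_Laurent_Series"
begin

text \<open>All series are formal Laurent series in q over the rationals (coefficients are
  in fact integers). Rational functions in q are identified with their Laurent
  expansion, realised by division in the field of formal Laurent series.\<close>

definition qpoch :: "nat \<Rightarrow> rat fls" where
  "qpoch m = (\<Prod>k\<in>{1..m}. (1 - fls_X ^ k))"

definition qpoch_inf :: "rat fls" where
  "qpoch_inf = lim (\<lambda>m. qpoch m)"

text \<open>Closed form of the tetrahedron evaluation H_{2n} (q = A^4).\<close>
definition H :: "nat \<Rightarrow> rat fls" where
  "H n = fls_X_intpow (- 2 * int n) * qpoch n ^ 12 / ((1 - fls_X) * qpoch (2 * n) ^ 6)
         * (\<Sum>i\<in>{0..n}. (-1) ^ i * fls_X ^ ((i + 3 * i\<^sup>2) div 2) * qpoch (4 * n - i)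
              / (qpoch (n - i) ^ 4 * qpoch i ^ 3))"

definition approx_eq :: "nat \<Rightarrow> rat fls \<Rightarrow> rat fls \<Rightarrow> bool" where
  "approx_eq n P1 P2 \<longleftrightarrow> P1 \<noteq> 0 \<and> P2 \<noteq> 0 \<and>
     (\<exists>\<epsilon>\<in>{1, -1}. \<forall>j<n. fls_nth P1 (fls_subdegree P1 + int j)
                          = \<epsilon> * fls_nth P2 (fls_subdegree P2 + int j))"

definition is_tail :: "rat fls \<Rightarrow> (nat \<Rightarrow> rat fls) \<Rightarrow> bool" where
  "is_tail T P \<longleftrightarrow> T \<noteq> 0 \<and> fls_subdegree T = 0 \<and> (\<forall>n. approx_eq n T (P n))"

end

theory Submission imports Defs begin
unbundle fps_syntax

definition ge :: "int \<Rightarrow> rat fls \<Rightarrow> bool" where "ge N f \<longleftrightarrow> (\<forall>k<N. f $$ k = 0)"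

lemma ge_subdeg: "ge N f \<longleftrightarrow> (f = 0 \<or> N \<le> fls_subdegree f)"
  unfolding ge_def
  by (metis fls_eq0_below_subdegree fls_subdegree_geI le_less_trans linorder_not_le nth_fls_subdegree_nonzero zero_fls.rep_eq)

lemma ge_add: "ge N f \<Longrightarrow> ge N g \<Longrightarrow> ge N (f + g)" by (simp add: ge_def)
lemma ge_diff: "ge N f \<Longrightarrow> ge N g \<Longrightarrow> ge N (f - g)" by (simp add: ge_def)
lemma ge_uminus: "ge N f \<Longrightarrow> ge N (- f)" by (simp add: ge_def)
lemma ge_mono: "ge N f \<Longrightarrow> M \<le> N \<Longrightarrow> ge M f" by (simp add: ge_def)
lemma ge_0[simp]: "ge N 0" by (simp add: ge_def)
lemma ge_mult: "ge a f \<Longrightarrow> ge b g \<Longrightarrow> ge (a+b) (f*g)"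
  unfolding ge_subdeg by (cases "f = 0 \<or> g = 0") auto
lemma ge_mult': "ge a f \<Longrightarrow> ge b g \<Longrightarrow> c \<le> a + b \<Longrightarrow> ge c (f*g)"
  using ge_mult ge_mono by blast
lemma ge_sum: "(\<And>i. i \<in> A \<Longrightarrow> ge N (f i)) \<Longrightarrow> ge N (sum f A)"
  by (simp add: ge_def fls_nth_sum)
lemma ge_one: "ge 0 1" by (simp add: ge_def)
lemma ge_power: "ge 0 a \<Longrightarrow> ge 0 (a ^ k)"
  by (induction k) (auto simp: ge_one intro: ge_mult[of 0 a 0, simplified])
lemma ge_Xpow: "ge (int k) (fls_X ^ k)" by (simp add: ge_def)

definition unit0 :: "rat fls \<Rightarrow> bool" where "unit0 f \<longleftrightarrow> f \<noteq> 0 \<and> fls_subdegree f = 0"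

lemma unit0_iff: "unit0 f \<longleftrightarrow> ge 0 f \<and> f $$ 0 \<noteq> 0"
proof
  assume "unit0 f" then show "ge 0 f \<and> f $$ 0 \<noteq> 0" unfolding unit0_def ge_subdeg
    using nth_fls_subdegree_nonzero by fastforce
next
  assume h: "ge 0 f \<and> f $$ 0 \<noteq> 0"
  then have "f \<noteq> 0" by auto
  moreover have "fls_subdegree f \<le> 0" using h fls_subdegree_leI by blast
  ultimately show "unit0 f" using h unfolding unit0_def ge_subdeg by auto
qed
lemma unit0_ge: "unit0 f \<Longrightarrow> ge 0 f" by (simp add: unit0_iff)
lemma unit0_mult: "unit0 f \<Longrightarrow> unit0 g \<Longrightarrow> unit0 (f*g)" by (simp add: unit0_def)
lemma unit0_power: "unit0 f \<Longrightarrow> unit0 (f ^ k)"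
  by (induction k) (auto simp: unit0_mult, simp add: unit0_def)
lemma unit0_inverse: "unit0 f \<Longrightarrow> unit0 (inverse f)" by (simp add: unit0_def)
lemma unit0_div: "unit0 f \<Longrightarrow> unit0 g \<Longrightarrow> unit0 (f/g)"
  by (simp add: divide_inverse unit0_mult unit0_inverse)
lemma ge_div: "ge N f \<Longrightarrow> unit0 g \<Longrightarrow> ge N (f/g)"
  using ge_mult[of N f 0 "inverse g"] unit0_ge[OF unit0_inverse, of g] by (simp add: divide_inverse)

definition cong :: "int \<Rightarrow> rat fls \<Rightarrow> rat fls \<Rightarrow> bool" where "cong N f g \<longleftrightarrow> ge N (f - g)"

lemma cong_refl: "cong N f f" by (simp add: cong_def)
lemma cong_sym: "cong N f g \<Longrightarrow> cong N g f"
  unfolding cong_def using ge_uminus by fastforce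
lemma cong_trans: "cong N f g \<Longrightarrow> cong N g h \<Longrightarrow> cong N f h"
  unfolding cong_def using ge_add by fastforce
lemma cong_mono: "cong N f g \<Longrightarrow> M \<le> N \<Longrightarrow> cong M f g"
  unfolding cong_def using ge_mono by blast
lemma cong_add: "cong N f g \<Longrightarrow> cong N f' g' \<Longrightarrow> cong N (f + f') (g + g')"
  unfolding cong_def using ge_add[of N "f-g" "f'-g'"] by (simp add: algebra_simps)
lemma cong_sum: "(\<And>i. i \<in> A \<Longrightarrow> cong N (f i) (g i)) \<Longrightarrow> cong N (sum f A) (sum g A)"
  unfolding cong_def using ge_sum[of A N "\<lambda>i. f i - g i"] by (simp add: sum_subtractf)
lemma cong_mult: "ge 0 a \<Longrightarrow> ge 0 b' \<Longrightarrow> cong M a a' \<Longrightarrow> cong M b b' \<Longrightarrow> cong M (a*b) (a'*b')"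
proof -
  assume h: "ge 0 a" "ge 0 b'" "cong M a a'" "cong M b b'"
  have "a*b - a'*b' = a*(b-b') + (a-a')*b'" by (simp add: algebra_simps)
  moreover have "ge M (a*(b-b'))" using ge_mult[OF h(1), of M "b-b'"] h(4) by (simp add: cong_def)
  moreover have "ge M ((a-a')*b')" using ge_mult[OF _ h(2), of M "a-a'"] h(3) by (simp add: cong_def)
  ultimately show ?thesis by (simp add: cong_def ge_add)
qed
lemma cong_mult_left: "ge 0 a \<Longrightarrow> cong M b b' \<Longrightarrow> cong M (a*b) (a*b')"
  unfolding cong_def using ge_mult[of 0 a M "b-b'"] by (simp add: algebra_simps)
lemma cong_power: "ge 0 a \<Longrightarrow> ge 0 a' \<Longrightarrow> cong M a a' \<Longrightarrow> cong M (a^k) (a'^k)"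
  by (induction k) (auto simp: cong_refl intro!: cong_mult ge_power)
lemma cong_inverse: "unit0 b \<Longrightarrow> unit0 b' \<Longrightarrow> cong M b b' \<Longrightarrow> cong M (inverse b) (inverse b')"
proof -
  assume h: "unit0 b" "unit0 b'" "cong M b b'"
  have "inverse b - inverse b' = (b' - b) / (b * b')"
    using h(1,2) by (simp add: unit0_def field_simps)
  moreover have "ge M (b' - b)" using h(3) cong_sym cong_def by blast
  ultimately show ?thesis by (simp add: cong_def ge_div h unit0_mult)
qed
lemma cong_div: "ge 0 a \<Longrightarrow> unit0 b \<Longrightarrow> unit0 b' \<Longrightarrow> cong M a a' \<Longrightarrow> cong M b b' \<Longrightarrow> cong M (a/b) (a'/b')"
  unfolding divide_inverse
  by (rule cong_mult) (auto intro: cong_inverse unit0_ge unit0_inverse)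


lemma dist_bound: "ge (int n) (f - g) \<Longrightarrow> dist f g \<le> inverse (2 ^ n)"
proof (cases "f = g")
  case False
  assume h: "ge (int n) (f - g)"
  then have d: "int n \<le> fls_subdegree (f - g)" using False by (simp add: ge_subdeg)
  then have "n \<le> nat (fls_subdegree (f - g))" by linarith
  then have "(2::real) ^ n \<le> 2 ^ nat (fls_subdegree (f - g))" by (rule power_increasing) simp
  then show ?thesis using False d by (simp add: dist_fls_def)
qed simp

lemma tendsto_ge: assumes "\<And>m. ge (int m) (s m - L)" shows "s \<longlonglongrightarrow> L"
proof (rule metric_LIMSEQ_I)
  fix r :: real assume r: "0 < r"
  from LIMSEQ_D[OF LIMSEQ_inverse_realpow_zero[of 2] r] obtain no where
    no: "\<forall>n\<ge>no. norm (inverse ((2::real) ^ n) - 0) < r" by auto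
  show "\<exists>no. \<forall>n\<ge>no. dist (s n) L < r"
  proof (intro exI allI impI)
    fix n assume "no \<le> n"
    then have "inverse ((2::real) ^ n) < r" using no by auto
    then show "dist (s n) L < r" using dist_bound[OF assms[of n]] by linarith
  qed
qed

lemma limit_exists:
  assumes a: "\<And>m m'. m \<le> m' \<Longrightarrow> ge (int m) (s m' - s m)" and b: "\<And>m. ge 0 (s m)"
  shows "\<exists>L. s \<longlonglongrightarrow> L \<and> (\<forall>m. ge (int m) (s m - L)) \<and> ge 0 L"
proof -
  define L where "L = fps_to_fls (Abs_fps (\<lambda>k. s (Suc k) $$ int k))"
  have c: "ge (int m) (s m - L)" for m
    unfolding ge_def
  proof (intro allI impI)
    fix k assume k: "k < int m"
    show "(s m - L) $$ k = 0"
    proof (cases "k < 0")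
      case True then show ?thesis using b[of m] by (simp add: L_def ge_def)
    next
      case False
      then have "Suc (nat k) \<le> m" using k by linarith
      from a[OF this] have "(s m - s (Suc (nat k))) $$ k = 0" using False by (simp add: ge_def)
      then show ?thesis using False by (simp add: L_def)
    qed
  qed
  moreover have "ge 0 L" by (simp add: L_def ge_def)
  ultimately show ?thesis using tendsto_ge by blast
qed


lemma qpoch_Suc: "qpoch (Suc m) = qpoch m * (1 - fls_X ^ Suc m)"
  by (simp add: qpoch_def)

lemma ge_1mX: "ge 0 (1 - fls_X ^ k)" by (simp add: ge_def)
lemma unit0_1mX: "k \<ge> 1 \<Longrightarrow> unit0 (1 - fls_X ^ k)" by (simp add: unit0_iff ge_def)
lemma unit0_qpoch: "unit0 (qpoch m)"
proof (induction m)
  case 0 show ?case by (simp add: qpoch_def unit0_def)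
next
  case (Suc m) show ?case unfolding qpoch_Suc by (rule unit0_mult[OF Suc unit0_1mX]) simp
qed
lemma ge_qpoch: "ge 0 (qpoch m)" by (rule unit0_ge[OF unit0_qpoch])

lemma qpoch_step: "m \<le> m' \<Longrightarrow> ge (int m + 1) (qpoch m' - qpoch m)"
proof (induction m' rule: dec_induct)
  case base then show ?case by simp
next
  case (step k)
  have eq: "qpoch (Suc k) - qpoch m = (qpoch k - qpoch m) + uminus (fls_X ^ Suc k * qpoch k)"
    by (simp add: qpoch_Suc algebra_simps)
  have "ge (int m + 1) (fls_X ^ Suc k * qpoch k)"
    by (rule ge_mult'[OF ge_Xpow ge_qpoch]) (use step in auto)
  then show ?case unfolding eq by (intro ge_add step.IH ge_uminus)
qed

lemma qpoch_inf_props: "unit0 qpoch_inf \<and> (\<forall>m. cong (int m + 1) (qpoch m) qpoch_inf)"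
proof -
  have a: "ge (int m) (qpoch m' - qpoch m)" if "m \<le> m'" for m m'
    by (rule ge_mono[OF qpoch_step[OF that]]) simp
  obtain L where L: "qpoch \<longlonglongrightarrow> L" "\<forall>m. ge (int m) (qpoch m - L)" "ge 0 L"
    using limit_exists[OF a ge_qpoch] by blast
  have Q: "qpoch_inf = L" unfolding qpoch_inf_def using L(1) by (rule limI)
  have c: "cong (int m + 1) (qpoch m) L" for m
  proof -
    have eq: "qpoch m - L = uminus (qpoch (Suc m) - qpoch m) + (qpoch (Suc m) - L)" by simp
    have "ge (int m + 1) (qpoch (Suc m) - qpoch m)"
      using qpoch_step[of m "Suc m"] by simp
    moreover have "ge (int m + 1) (qpoch (Suc m) - L)" using L(2)[rule_format, of "Suc m"] by (simp add: add.commute)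
    ultimately show ?thesis unfolding cong_def eq by (intro ge_add ge_uminus)
  qed
  have "L $$ 0 = qpoch 0 $$ 0" using c[of 0] by (simp add: cong_def ge_def)
  then have "unit0 L" using L(3) by (simp add: unit0_iff qpoch_def)
  then show ?thesis using c Q by simp
qed

definition cterm :: "nat \<Rightarrow> rat fls" where
  "cterm i = (-1) ^ i * fls_X ^ ((i + 3 * i\<^sup>2) div 2) / qpoch i ^ 3"

lemma ge_sign: "ge 0 ((-1) ^ i)" by (rule ge_power[OF ge_uminus[OF ge_one]])

lemma ge_cterm: "ge (int i) (cterm i)"
proof -
  have "2 * i \<le> i + 3 * i\<^sup>2" by (simp add: power2_eq_square)
  from div_le_mono[OF this, of 2] have "i \<le> (i + 3 * i\<^sup>2) div 2" by simp
  then have "ge (int i) ((-1) ^ i * fls_X ^ ((i + 3 * i\<^sup>2) div 2))"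
    by (intro ge_mult'[OF ge_sign ge_Xpow]) simp
  then show ?thesis unfolding cterm_def by (rule ge_div) (intro unit0_power unit0_qpoch)
qed

lemma series_props: "cong (int n + 1) (\<Sum>i. cterm i) (\<Sum>i\<in>{0..n}. cterm i) \<and> unit0 (\<Sum>i. cterm i)"
proof -
  define s where "s m = (\<Sum>i<m. cterm i)" for m
  have st: "ge (int m) (s m' - s m)" if "m \<le> m'" for m m'
    using that
  proof (induction m' rule: dec_induct)
    case base then show ?case by simp
  next
    case (step k)
    have eq: "s (Suc k) - s m = cterm k + (s k - s m)" by (simp add: s_def)
    have "ge (int m) (cterm k)" using ge_mono[OF ge_cterm[of k]] step by simp
    then show ?case unfolding eq by (intro ge_add step.IH)
  qed
  have s0: "ge 0 (s m)" for m unfolding s_def by (intro ge_sum) (rule ge_mono[OF ge_cterm], simp)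
  obtain S where S: "s \<longlonglongrightarrow> S" "\<forall>m. ge (int m) (s m - S)" "ge 0 S"
    using limit_exists[of s] st s0 by blast
  have "cterm sums S" using S(1) unfolding sums_def s_def by simp
  then have eq: "(\<Sum>i. cterm i) = S" by (rule sums_unique[symmetric])
  have "s (Suc n) = (\<Sum>i\<in>{0..n}. cterm i)" unfolding s_def by (simp add: lessThan_Suc_atMost atLeast0AtMost)
  moreover have "cong (int n + 1) (s (Suc n)) S"
    using S(2)[rule_format, of "Suc n"] unfolding cong_def by (simp add: add.commute)
  ultimately have c: "cong (int n + 1) S (\<Sum>i\<in>{0..n}. cterm i)" using cong_sym by simp
  have "S $$ 0 = s 1 $$ 0" using S(2)[rule_format, of 1] by (simp add: ge_def)
  also have "\<dots> = 1" by (simp add: s_def cterm_def qpoch_def)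
  finally have "unit0 S" using S(3) by (simp add: unit0_iff)
  then show ?thesis using c eq by simp
qed


lemma unit0_ne: "unit0 f \<Longrightarrow> f \<noteq> 0" by (simp add: unit0_def)

lemma main_cong:
  fixes n :: nat
  defines "Q \<equiv> qpoch_inf" and "S \<equiv> (\<Sum>i. cterm i)"
  defines "G \<equiv> qpoch n ^ 12 / ((1 - fls_X) * qpoch (2 * n) ^ 6)
         * (\<Sum>i\<in>{0..n}. (-1) ^ i * fls_X ^ ((i + 3 * i\<^sup>2) div 2) * qpoch (4 * n - i)
              / (qpoch (n - i) ^ 4 * qpoch i ^ 3))"
  shows "cong (int n + 1) G (Q ^ 3 / (1 - fls_X) * S)"
proof -
  let ?N = "int n + 1"
  have uQ: "unit0 Q" and cQ: "\<And>m. cong (int m + 1) (qpoch m) Q"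
    using qpoch_inf_props unfolding Q_def by auto
  have gQ: "ge 0 Q" by (rule unit0_ge[OF uQ])
  have cS: "cong ?N S (\<Sum>i\<in>{0..n}. cterm i)" and uS: "unit0 S"
    using series_props unfolding S_def by auto
  have u1X: "unit0 (1 - fls_X)" using unit0_1mX[of 1] by simp
  have cQm: "cong ?N (qpoch m) Q" if "n \<le> m" for m
    by (rule cong_mono[OF cQ]) (use that in simp)
  define A where "A = qpoch n ^ 12 / ((1 - fls_X) * qpoch (2 * n) ^ 6)"
  define A' where "A' = Q ^ 12 / ((1 - fls_X) * Q ^ 6)"
  have cA: "cong ?N A A'" unfolding A_def A'_def
  proof (rule cong_div)
    show "ge 0 (qpoch n ^ 12)" by (rule ge_power[OF ge_qpoch])
    show "unit0 ((1 - fls_X) * qpoch (2 * n) ^ 6)" by (intro unit0_mult u1X unit0_power unit0_qpoch)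
    show "unit0 ((1 - fls_X) * Q ^ 6)" by (intro unit0_mult u1X unit0_power uQ)
    show "cong ?N (qpoch n ^ 12) (Q ^ 12)" by (rule cong_power[OF ge_qpoch gQ cQm]) simp
    show "cong ?N ((1 - fls_X) * qpoch (2 * n) ^ 6) ((1 - fls_X) * Q ^ 6)"
      by (rule cong_mult_left[OF unit0_ge[OF u1X]]) (rule cong_power[OF ge_qpoch gQ cQm], simp)
  qed
  have gA: "ge 0 A" unfolding A_def
    by (intro ge_div ge_power ge_qpoch unit0_mult u1X unit0_power unit0_qpoch)
  have ct: "cong ?N ((-1) ^ i * fls_X ^ ((i + 3 * i\<^sup>2) div 2) * qpoch (4 * n - i)
              / (qpoch (n - i) ^ 4 * qpoch i ^ 3)) (cterm i / Q ^ 3)" if i: "i \<in> {0..n}" for i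
  proof -
    have i': "i \<le> n" using i by simp
    have nz: "qpoch m \<noteq> 0" for m by (rule unit0_ne[OF unit0_qpoch])
    have nzQ: "Q \<noteq> 0" by (rule unit0_ne[OF uQ])
    have e1: "(-1) ^ i * fls_X ^ ((i + 3 * i\<^sup>2) div 2) * qpoch (4 * n - i)
              / (qpoch (n - i) ^ 4 * qpoch i ^ 3) = cterm i * (qpoch (4 * n - i) / qpoch (n - i) ^ 4)"
      unfolding cterm_def using nz by (simp add: field_simps)
    have e2: "cterm i / Q ^ 3 = cterm i * (Q / Q ^ 4)"
      using nzQ by (simp add: field_simps power_Suc numeral_eq_Suc)
    have cR: "cong (int (n - i) + 1) (qpoch (4 * n - i) / qpoch (n - i) ^ 4) (Q / Q ^ 4)"
    proof (rule cong_div)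
      show "ge 0 (qpoch (4 * n - i))" by (rule ge_qpoch)
      show "unit0 (qpoch (n - i) ^ 4)" by (intro unit0_power unit0_qpoch)
      show "unit0 (Q ^ 4)" by (intro unit0_power uQ)
      show "cong (int (n - i) + 1) (qpoch (4 * n - i)) Q"
        by (rule cong_mono[OF cQ]) (use i' in simp)
      show "cong (int (n - i) + 1) (qpoch (n - i) ^ 4) (Q ^ 4)"
        by (rule cong_power[OF ge_qpoch gQ cQ])
    qed
    have "ge ?N (cterm i * (qpoch (4 * n - i) / qpoch (n - i) ^ 4 - Q / Q ^ 4))"
      by (rule ge_mult'[OF ge_cterm cR[unfolded cong_def]]) (use i' in simp)
    then show ?thesis unfolding e1 e2 cong_def by (simp add: right_diff_distrib)
  qed
  have csum: "cong ?N (\<Sum>i\<in>{0..n}. (-1) ^ i * fls_X ^ ((i + 3 * i\<^sup>2) div 2) * qpoch (4 * n - i)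
              / (qpoch (n - i) ^ 4 * qpoch i ^ 3)) ((\<Sum>i\<in>{0..n}. cterm i) / Q ^ 3)"
    unfolding sum_divide_distrib by (rule cong_sum[OF ct])
  have gsum: "ge 0 (\<Sum>i\<in>{0..n}. cterm i)" by (intro ge_sum) (rule ge_mono[OF ge_cterm], simp)
  have uQ3: "unit0 (Q ^ 3)" by (intro unit0_power uQ)
  have csum2: "cong ?N ((\<Sum>i\<in>{0..n}. cterm i) / Q ^ 3) (S / Q ^ 3)"
    by (rule cong_div[OF gsum uQ3 uQ3 cong_sym[OF cS] cong_refl])
  have gS3: "ge 0 (S / Q ^ 3)" by (intro ge_div unit0_ge uS uQ3)
  have cG: "cong ?N G (A' * (S / Q ^ 3))" unfolding G_def A_def[symmetric]
    by (rule cong_mult[OF gA gS3 cA cong_trans[OF csum csum2]])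
  have "A' * (S / Q ^ 3) = Q ^ 3 / (1 - fls_X) * S"
    unfolding A'_def using unit0_ne[OF uQ] unit0_ne[OF u1X]
    by (simp add: field_simps power_Suc numeral_eq_Suc)
  with cG show ?thesis by simp
qed


theorem mainTheorem7:
  shows "is_tail
     (qpoch_inf ^ 3 / (1 - fls_X) *
       (\<Sum>i. (-1) ^ i * fls_X ^ ((i + 3 * i\<^sup>2) div 2) / qpoch i ^ 3))
     H"
proof -
  have ceq: "(\<lambda>i. (-1) ^ i * fls_X ^ ((i + 3 * i\<^sup>2) div 2) / qpoch i ^ 3) = cterm"
    by (simp add: cterm_def fun_eq_iff)
  define T where "T = qpoch_inf ^ 3 / (1 - fls_X) * (\<Sum>i. cterm i)"
  have uQ: "unit0 qpoch_inf" using qpoch_inf_props by auto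
  have u1X: "unit0 (1 - fls_X)" using unit0_1mX[of 1] by simp
  have uT: "unit0 T" unfolding T_def
    using series_props by (intro unit0_mult unit0_div unit0_power uQ u1X) auto
  have "approx_eq n T (H n)" for n
  proof -
    define G where "G = qpoch n ^ 12 / ((1 - fls_X) * qpoch (2 * n) ^ 6)
         * (\<Sum>i\<in>{0..n}. (-1) ^ i * fls_X ^ ((i + 3 * i\<^sup>2) div 2) * qpoch (4 * n - i)
              / (qpoch (n - i) ^ 4 * qpoch i ^ 3))"
    have c: "cong (int n + 1) G T" unfolding G_def T_def by (rule main_cong)
    have "H n = fls_X_intpow (- 2 * int n) * G"
      unfolding H_def G_def by (simp only: mult.assoc times_divide_eq_right[symmetric])
    then have HG: "H n = fls_shift (2 * int n) G"
      by (simp only: fls_X_intpow_times_conv_shift(1)) simp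
    have coef: "G $$ k = T $$ k" if "k < int n + 1" for k
      using c that unfolding cong_def ge_def by simp
    have gG: "ge 0 G"
      unfolding ge_def using coef unit0_ge[OF uT] by (simp add: ge_def)
    have "unit0 G" using uT gG coef[of 0] by (simp add: unit0_iff)
    then have Gnz: "G \<noteq> 0" and Gsd: "fls_subdegree G = 0" by (auto simp: unit0_def)
    have Hnz: "H n \<noteq> 0" using Gnz unfolding HG by (metis fls_shift_eq0_iff)
    have Hsd: "fls_subdegree (H n) = - 2 * int n" unfolding HG using Gnz Gsd by simp
    show ?thesis unfolding approx_eq_def
    proof (intro conjI bexI[of _ 1])
      show "T \<noteq> 0" "H n \<noteq> 0" using uT Hnz by (auto simp: unit0_def)
      show "\<forall>j<n. T $$ (fls_subdegree T + int j) = 1 * H n $$ (fls_subdegree (H n) + int j)"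
        using uT Hsd coef unfolding HG by (auto simp: unit0_def)
    qed simp
  qed
  then show ?thesis using uT unfolding is_tail_def T_def ceq unit0_def by auto
qed

end
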